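(* Let $K$ be a field, $Q$ the bipartite type $A$ quiver with vertices $y_0,x_1,\dots,x_n,y_n$ and arrows $\alpha_i\colon x_i\to y_{i-1}$, $\beta_i\colon x_i\to y_i$, and $\mathbf{d}$ a dimension vector. A matrix $Z\in Y^{\mathbf{w}}_\circ$ lies in the image of $\zeta$ if and only if both (NW) $\operatorname{rank}Z_{y_i\times x_j}=0$ for all $0\le i\le n-2$ and $i+2\le j\le n$, and (SE) $\operatorname{rank}Z_{x_i\times y_j}=\sum_{k=i}^n\mathbf{d}(x_k)+\sum_{k=0}^j\mathbf{d}(y_k)$ for all $2\le i\le n$ and $i-1\le j\le n-1$.
   Context: $d_x=\sum\mathbf{d}(x_i)$, $d_y=\sum\mathbf{d}(y_i)$, $d=d_x+d_y$. $Y^{\mathbf{w}}_\circ$ is the set of $d\times d$ matrices $\begin{pmatrix}*&\mathbf{1}_{d_y}\\ \mathbf{1}_{d_x}&0\end{pmatrix}$ with $*$ an arbitrary $d_y\times d_x$ block. Block rows of such a matrix are labeled, top to bottom, $y_0,\dots,y_n,x_n,\dots,x_1$ (of sizes $\mathbf{d}$ of the label) and block columns, left to right, $x_n,\dots,x_1,y_0,\dots,y_n$. For vertices $v,v'$, $Z_{v\times v'}$ is the northwest-justified submatrix of $Z$ whose southeast corner is the block in block row $v$ and block column $v'$. For $V\in\mathrm{rep}_Q(\mathbf{d})$ (tuples $V_a\in\mathrm{Mat}_{\mathbf{d}(ha)\times\mathbf{d}(ta)}(K)$), $M_Q(V)$ is the block matrix with block rows $y_0,\dots,y_n$ and block columns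 $x_n,\dots,x_1$, $V_{\alpha_i}$ in block $(y_{i-1},x_i)$, $V_{\beta_i}$ in block $(y_i,x_i)$, zeros elsewhere, and $\zeta(V)=\begin{pmatrix}M_Q(V)&\mathbf{1}_{d_y}\\ \mathbf{1}_{d_x}&0\end{pmatrix}$. *)

theory Defs
  imports "Jordan_Normal_Form.DL_Rank"
begin

text \<open>Dimension vector: dx i = d(x_i) for 1 \<le> i \<le> n, dy i = d(y_i) for 0 \<le> i \<le> n.\<close>

definition mat_rank :: "'a::field mat \<Rightarrow> nat" where
  "mat_rank A = vec_space.rank (dim_row A) A"

definition d_x :: "nat \<Rightarrow> (nat \<Rightarrow> nat) \<Rightarrow> nat" where
  "d_x n dx = (\<Sum>k=1..n. dx k)"

definition d_y :: "nat \<Rightarrow> (nat \<Rightarrow> nat) \<Rightarrow> nat" where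
  "d_y n dy = (\<Sum>k=0..n. dy k)"

text \<open>Row offsets (start) of block row y_a (rows y_0,...,y_n,x_n,...,x_1).\<close>
definition yrow_off :: "(nat \<Rightarrow> nat) \<Rightarrow> nat \<Rightarrow> nat" where
  "yrow_off dy a = (\<Sum>k<a. dy k)"

text \<open>Column offsets (start) of block column x_b (columns x_n,...,x_1,y_0,...,y_n).\<close>
definition xcol_off :: "nat \<Rightarrow> (nat \<Rightarrow> nat) \<Rightarrow> nat \<Rightarrow> nat" where
  "xcol_off n dx b = (\<Sum>k\<in>{b<..n}. dx k)"

text \<open>End (exclusive) of block rows / columns: sizes of the northwest submatrices.\<close>
definition row_end_y :: "(nat \<Rightarrow> nat) \<Rightarrow> nat \<Rightarrow> nat" where
  "row_end_y dy i = (\<Sum>k=0..i. dy k)"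

definition row_end_x :: "nat \<Rightarrow> (nat \<Rightarrow> nat) \<Rightarrow> (nat \<Rightarrow> nat) \<Rightarrow> nat \<Rightarrow> nat" where
  "row_end_x n dx dy i = d_y n dy + (\<Sum>k=i..n. dx k)"

definition col_end_x :: "nat \<Rightarrow> (nat \<Rightarrow> nat) \<Rightarrow> nat \<Rightarrow> nat" where
  "col_end_x n dx j = (\<Sum>k=j..n. dx k)"

definition col_end_y :: "nat \<Rightarrow> (nat \<Rightarrow> nat) \<Rightarrow> (nat \<Rightarrow> nat) \<Rightarrow> nat \<Rightarrow> nat" where
  "col_end_y n dx dy j = d_x n dx + (\<Sum>k=0..j. dy k)"

definition nw_sub :: "'a mat \<Rightarrow> nat \<Rightarrow> nat \<Rightarrow> 'a mat" where
  "nw_sub Z r c = mat r c (\<lambda>(i,j). Z $$ (i,j))"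

definition Z_yx :: "nat \<Rightarrow> (nat \<Rightarrow> nat) \<Rightarrow> (nat \<Rightarrow> nat) \<Rightarrow> 'a mat \<Rightarrow> nat \<Rightarrow> nat \<Rightarrow> 'a mat" where
  "Z_yx n dx dy Z i j = nw_sub Z (row_end_y dy i) (col_end_x n dx j)"

definition Z_xy :: "nat \<Rightarrow> (nat \<Rightarrow> nat) \<Rightarrow> (nat \<Rightarrow> nat) \<Rightarrow> 'a mat \<Rightarrow> nat \<Rightarrow> nat \<Rightarrow> 'a mat" where
  "Z_xy n dx dy Z i j = nw_sub Z (row_end_x n dx dy i) (col_end_y n dx dy j)"

definition zeta_block :: "nat \<Rightarrow> (nat \<Rightarrow> nat) \<Rightarrow> (nat \<Rightarrow> nat) \<Rightarrow> 'a::field mat \<Rightarrow> 'a mat" where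
  "zeta_block n dx dy S = four_block_mat S (1\<^sub>m (d_y n dy)) (1\<^sub>m (d_x n dx)) (0\<^sub>m (d_x n dx) (d_y n dy))"

definition Y_circ :: "nat \<Rightarrow> (nat \<Rightarrow> nat) \<Rightarrow> (nat \<Rightarrow> nat) \<Rightarrow> 'a::field mat set" where
  "Y_circ n dx dy = {zeta_block n dx dy S | S. S \<in> carrier_mat (d_y n dy) (d_x n dx)}"

definition rep_Q :: "nat \<Rightarrow> (nat \<Rightarrow> nat) \<Rightarrow> (nat \<Rightarrow> nat) \<Rightarrow> ((nat \<Rightarrow> 'a mat) \<times> (nat \<Rightarrow> 'a mat)) set" where
  "rep_Q n dx dy = {(al, be). \<forall>i\<in>{1..n}. al i \<in> carrier_mat (dy (i - 1)) (dx i) \<and> be i \<in> carrier_mat (dy i) (dx i)}"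

definition place :: "'a::zero mat \<Rightarrow> nat \<Rightarrow> nat \<Rightarrow> nat \<Rightarrow> nat \<Rightarrow> 'a" where
  "place A r0 c0 r c = (if r0 \<le> r \<and> r < r0 + dim_row A \<and> c0 \<le> c \<and> c < c0 + dim_col A
      then A $$ (r - r0, c - c0) else 0)"

definition M_Q :: "nat \<Rightarrow> (nat \<Rightarrow> nat) \<Rightarrow> (nat \<Rightarrow> nat) \<Rightarrow> (nat \<Rightarrow> 'a::field mat) \<times> (nat \<Rightarrow> 'a mat) \<Rightarrow> 'a mat" where
  "M_Q n dx dy V = mat (d_y n dy) (d_x n dx) (\<lambda>(r,c).
      (\<Sum>i\<in>{1..n}. place (fst V i) (yrow_off dy (i - 1)) (xcol_off n dx i) r c
                 + place (snd V i) (yrow_off dy i) (xcol_off n dx i) r c))"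

definition zeta :: "nat \<Rightarrow> (nat \<Rightarrow> nat) \<Rightarrow> (nat \<Rightarrow> nat) \<Rightarrow> (nat \<Rightarrow> 'a::field mat) \<times> (nat \<Rightarrow> 'a mat) \<Rightarrow> 'a mat" where
  "zeta n dx dy V = zeta_block n dx dy (M_Q n dx dy V)"

end

theory Submission
  imports Defs
begin

lemma rank_ge_pivot:
  fixes A :: "'a::field mat" and f :: "nat \<Rightarrow> nat"
  assumes A: "A \<in> carrier_mat n nc"
  and J: "J \<subseteq> {..<nc}"
  and piv: "\<And>j. j\<in>J \<Longrightarrow> piv j < n \<and> A $$ (piv j, j) \<noteq> 0"
  and tri: "\<And>j j'. j\<in>J \<Longrightarrow> j'\<in>J \<Longrightarrow> j' \<noteq> j \<Longrightarrow> A $$ (piv j, j') \<noteq> 0 \<Longrightarrow> f j < f j'"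
  shows "card J \<le> vec_space.rank n A"
proof -
  interpret vec_space "TYPE('a)" n .
  have finJ: "finite J" using J finite_subset by blast
  have colidx: "col A j $ r = A $$ (r, j)" if "j \<in> J" "r < n" for j r
    using that J A by auto
  have inj: "inj_on (col A) J"
  proof (rule inj_onI, rule ccontr)
    fix j j' assume jj: "j \<in> J" "j' \<in> J" "col A j = col A j'" "j \<noteq> j'"
    have "A $$ (piv j, j') = A $$ (piv j, j)" using colidx[of j "piv j"] colidx[of j' "piv j"] piv jj by metis
    hence 1: "f j < f j'" using tri[of j j'] piv[of j] jj by auto
    have "A $$ (piv j', j) = A $$ (piv j', j')" using colidx[of j "piv j'"] colidx[of j' "piv j'"] piv jj by metis
    hence "f j' < f j" using tri[of j' j] piv[of j'] jj by auto
    with 1 show False by simp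
  qed
  have Usub: "col A ` J \<subseteq> set (cols A)" using J A by (auto simp: cols_def)
  have Ucar: "col A ` J \<subseteq> carrier_vec n" using A by auto
  have li: "lin_indpt (col A ` J)"
  proof
    assume ld: "lin_dep (col A ` J)"
    obtain a v where av: "lincomb a (col A ` J) = 0\<^sub>v n" "v \<in> col A ` J" "a v \<noteq> 0"
      using finite_lin_dep[OF _ ld] finJ Ucar by auto
    define B where "B = {j\<in>J. a (col A j) \<noteq> 0}"
    have finB: "finite B" "B \<noteq> {}" using finJ av unfolding B_def by auto
    have "Max (f ` B) \<in> f ` B" using finB by (intro Max_in) auto
    then obtain j0 where j0: "j0 \<in> B" "f j0 = Max (f ` B)" by (metis imageE)
    have maxj: "\<And>j. j \<in> B \<Longrightarrow> f j \<le> f j0" using j0 finB by auto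
    have p: "piv j0 < n" "A $$ (piv j0, j0) \<noteq> 0" using piv j0 unfolding B_def by auto
    have "0 = lincomb a (col A ` J) $ piv j0" using av p by simp
    also have "\<dots> = (\<Sum>x\<in>col A ` J. a x * x $ piv j0)" using lincomb_index[OF p(1) Ucar] .
    also have "\<dots> = (\<Sum>j\<in>J. a (col A j) * col A j $ piv j0)"
      by (rule sum.reindex[OF inj, unfolded comp_def])
    also have "\<dots> = (\<Sum>j\<in>J. if j = j0 then a (col A j0) * A $$ (piv j0, j0) else 0)"
    proof (rule sum.cong[OF refl])
      fix j assume jJ: "j \<in> J"
      show "a (col A j) * col A j $ piv j0 = (if j = j0 then a (col A j0) * A $$ (piv j0, j0) else 0)"
      proof (cases "j = j0")
        case True then show ?thesis using colidx jJ p by simp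
      next
        case False
        have "a (col A j) = 0 \<or> A $$ (piv j0, j) = 0"
        proof (rule ccontr)
          assume "\<not> ?thesis"
          hence "j \<in> B" "f j0 < f j" using tri[of j0 j] jJ j0 False unfolding B_def by auto
          with maxj show False by force
        qed
        then show ?thesis using colidx jJ p False by auto
      qed
    qed
    also have "\<dots> = a (col A j0) * A $$ (piv j0, j0)"
      using j0 finJ unfolding B_def by (simp add: sum.delta)
    finally show False using j0 p unfolding B_def by simp
  qed
  have "card (col A ` J) \<le> rank A" by (rule rank_ge_card_indpt[OF A Usub li])
  thus ?thesis using card_image[OF inj] by simp
qed

lemma rank_le_sum_products:
  fixes A :: "'a::field mat"
  assumes A: "A \<in> carrier_mat n nc"
  and e: "\<And>r c. r < n \<Longrightarrow> c < nc \<Longrightarrow> A $$ (r,c) = (\<Sum>k<m. f k r * g k c)"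
  shows "vec_space.rank n A \<le> m"
  using A e
proof (induction m arbitrary: A)
  case 0
  interpret vec_space "TYPE('a)" n .
  have "A = 0\<^sub>m n nc" using 0 by (intro eq_matI) auto
  then show ?case using rank_0I by simp
next
  case (Suc m)
  interpret vec_space "TYPE('a)" n .
  define B where "B = mat n nc (\<lambda>(r,c). \<Sum>k<m. f k r * g k c)"
  define C where "C = mat n nc (\<lambda>(r,c). f m r * g m c)"
  have BC: "B \<in> carrier_mat n nc" "C \<in> carrier_mat n nc" unfolding B_def C_def by auto
  have "A = B + C" using Suc.prems unfolding B_def C_def by (intro eq_matI) auto
  moreover have "rank B \<le> m" using Suc.IH[OF BC(1)] unfolding B_def by auto
  moreover have "rank C \<le> 1" by (rule rank_le_1_product_entries[OF BC(2)]) (auto simp: C_def)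
  ultimately show ?case using rank_subadditive[OF BC] by simp
qed

lemma mat_rank_0_iff:
  fixes A :: "'a::field mat"
  shows "mat_rank A = 0 \<longleftrightarrow> (\<forall>r c. r < dim_row A \<longrightarrow> c < dim_col A \<longrightarrow> A $$ (r,c) = 0)"
proof
  assume h: "mat_rank A = 0"
  show "\<forall>r c. r < dim_row A \<longrightarrow> c < dim_col A \<longrightarrow> A $$ (r,c) = 0"
  proof (rule ccontr)
    assume "\<not> ?thesis"
    then obtain r c where rc: "r < dim_row A" "c < dim_col A" "A $$ (r,c) \<noteq> 0" by auto
    have "card {c} \<le> vec_space.rank (dim_row A) A"
      by (rule rank_ge_pivot[where piv = "\<lambda>_. r" and f = "\<lambda>_. 0" and nc = "dim_col A"]) (use rc in auto)
    thus False using h unfolding mat_rank_def by simp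
  qed
next
  assume h: "\<forall>r c. r < dim_row A \<longrightarrow> c < dim_col A \<longrightarrow> A $$ (r,c) = 0"
  have "vec_space.rank (dim_row A) A \<le> 0"
    by (rule rank_le_sum_products[where nc = "dim_col A" and f = "\<lambda>_ _. 0" and g = "\<lambda>_ _. 0"]) (use h in auto)
  thus "mat_rank A = 0" unfolding mat_rank_def by simp
qed

lemma sum_lessThan_split_add:
  fixes q :: nat and F :: "nat \<Rightarrow> 'a::comm_monoid_add" shows "(\<Sum>k<p+q. F k) = (\<Sum>k<p. F k) + (\<Sum>t<q. F (p+t))"
  by (induction q) (auto simp: add.assoc)

lemma rank_block:
  fixes A :: "'a::field mat"
  assumes A: "A \<in> carrier_mat (m1 + p) (m2 + q)" and pq: "p \<le> m2" "q \<le> m1"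
  and e: "\<And>r c. r < m1 + p \<Longrightarrow> c < m2 + q \<Longrightarrow> A $$ (r,c) =
     (if r < m1 then (if c < m2 then s r c else (if r = c - m2 then 1 else 0))
      else (if c < m2 then (if r - m1 = c then 1 else 0) else 0))"
  shows "mat_rank A = p + q \<longleftrightarrow> (\<forall>r c. q \<le> r \<longrightarrow> r < m1 \<longrightarrow> p \<le> c \<longrightarrow> c < m2 \<longrightarrow> s r c = 0)"
proof -
  have dr: "dim_row A = m1 + p" using A by auto
  define J where "J = {..<p} \<union> {m2..<m2+q}"
  have aux: "\<And>j. j < m2 + q \<Longrightarrow> \<not> j < m2 \<Longrightarrow> j - m2 < m1" using pq by auto
  have cardJ: "card J = p + q" unfolding J_def using pq by (subst card_Un_disjoint) auto
  have lower: "p + q \<le> mat_rank A"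
  proof -
    have "card J \<le> vec_space.rank (m1+p) A"
    proof (rule rank_ge_pivot[OF A, where piv = "\<lambda>j. if j < m2 then m1 + j else j - m2"
          and f = "\<lambda>j. if j < m2 then 2 else 0"])
      show "J \<subseteq> {..<m2 + q}" unfolding J_def using pq by auto
      fix j assume j: "j \<in> J"
      show "(if j < m2 then m1 + j else j - m2) < m1 + p \<and> A $$ (if j < m2 then m1 + j else j - m2, j) \<noteq> 0"
        using j pq unfolding J_def by (auto simp: e aux)
      fix j' assume j': "j' \<in> J" "j' \<noteq> j"
        "A $$ (if j < m2 then m1 + j else j - m2, j') \<noteq> 0"
      then show "(if j < m2 then 2 else 0 :: nat) < (if j' < m2 then 2 else 0)"
        using j pq unfolding J_def by (auto simp: e aux split: if_splits)
    qed
    thus ?thesis using cardJ dr unfolding mat_rank_def by simp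
  qed
  show ?thesis
  proof
    assume h: "mat_rank A = p + q"
    show "\<forall>r c. q \<le> r \<longrightarrow> r < m1 \<longrightarrow> p \<le> c \<longrightarrow> c < m2 \<longrightarrow> s r c = 0"
    proof (rule ccontr)
      assume "\<not> ?thesis"
      then obtain r0 c0 where rc: "q \<le> r0" "r0 < m1" "p \<le> c0" "c0 < m2" "s r0 c0 \<noteq> 0" by auto
      have c0J: "c0 \<notin> J" using rc unfolding J_def by auto
      have "card (insert c0 J) \<le> vec_space.rank (m1+p) A"
      proof (rule rank_ge_pivot[OF A, where piv = "\<lambda>j. if j = c0 then r0 else if j < m2 then m1 + j else j - m2"
            and f = "\<lambda>j. if j = c0 then 1 else if j < m2 then 2 else 0"])
        show "insert c0 J \<subseteq> {..<m2 + q}" unfolding J_def using pq rc by auto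
        fix j assume j: "j \<in> insert c0 J"
        show "(if j = c0 then r0 else if j < m2 then m1 + j else j - m2) < m1 + p \<and>
          A $$ (if j = c0 then r0 else if j < m2 then m1 + j else j - m2, j) \<noteq> 0"
          using j pq rc unfolding J_def by (auto simp: e aux)
        fix j' assume j': "j' \<in> insert c0 J" "j' \<noteq> j"
          "A $$ (if j = c0 then r0 else if j < m2 then m1 + j else j - m2, j') \<noteq> 0"
        then show "(if j = c0 then 1 else if j < m2 then 2 else 0 :: nat) < (if j' = c0 then 1 else if j' < m2 then 2 else 0)"
          using j pq rc unfolding J_def by (auto simp: e aux split: if_splits)
      qed
      then show False using cardJ c0J h dr J_def unfolding mat_rank_def by simp
    qed
  next
    assume z: "\<forall>r c. q \<le> r \<longrightarrow> r < m1 \<longrightarrow> p \<le> c \<longrightarrow> c < m2 \<longrightarrow> s r c = 0"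
    have zero: "A $$ (r,c) = 0" if "r < m1 + p" "c < m2 + q" "q \<le> r" "p \<le> c" for r c
      using e[OF that(1,2)] z that by auto
    have "vec_space.rank (m1+p) A \<le> p + q"
    proof (rule rank_le_sum_products[OF A, where
          f = "\<lambda>k r. if k < p then A $$ (r,k) else (if r = k - p then 1 else 0)" and
          g = "\<lambda>k c. if k < p then (if c = k then 1 else 0) else (if p \<le> c then A $$ (k - p, c) else 0)"])
      fix r c assume rc: "r < m1 + p" "c < m2 + q"
      have s1: "(\<Sum>k<p. (if k < p then A $$ (r,k) else (if r = k - p then 1 else 0)) *
                 (if k < p then (if c = k then 1 else 0) else (if p \<le> c then A $$ (k - p, c) else 0)))
             = (\<Sum>k<p. if k = c then A $$ (r,c) else 0)"
        by (rule sum.cong) auto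
      have s2: "(\<Sum>t<q. (if p + t < p then A $$ (r,p+t) else (if r = p + t - p then 1 else 0)) *
                 (if p + t < p then (if c = p + t then 1 else 0) else (if p \<le> c then A $$ (p + t - p, c) else 0)))
             = (\<Sum>t<q. if t = r then (if p \<le> c then A $$ (r, c) else 0) else 0)"
        by (rule sum.cong) auto
      show "A $$ (r,c) = (\<Sum>k<p + q. (if k < p then A $$ (r,k) else (if r = k - p then 1 else 0)) *
                 (if k < p then (if c = k then 1 else 0) else (if p \<le> c then A $$ (k - p, c) else 0)))"
        unfolding sum_lessThan_split_add s1 s2 using zero[OF rc] rc
        by (simp add: sum.delta)
    qed
    then show "mat_rank A = p + q" using lower dr unfolding mat_rank_def by simp
  qed
qed

lemma zb_dims: "T \<in> carrier_mat (d_y n dy) (d_x n dx) \<Longrightarrow> dim_row (zeta_block n dx dy T) = d_y n dy + d_x n dx"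
  "T \<in> carrier_mat (d_y n dy) (d_x n dx) \<Longrightarrow> dim_col (zeta_block n dx dy T) = d_x n dx + d_y n dy"
  unfolding zeta_block_def by auto

lemma zb_entry:
  assumes T: "T \<in> carrier_mat (d_y n dy) (d_x n dx)"
    and rc: "r < d_y n dy + d_x n dx" "c < d_x n dx + d_y n dy"
  shows "zeta_block n dx dy T $$ (r,c) =
    (if r < d_y n dy then (if c < d_x n dx then T $$ (r,c) else (if r = c - d_x n dx then 1 else 0))
     else (if c < d_x n dx then (if r - d_y n dy = c then 1 else 0) else 0))"
  using T rc unfolding zeta_block_def by (auto simp: index_mat_four_block)

lemma yrow_Suc: "yrow_off dy (Suc a) = yrow_off dy a + dy a"
  unfolding yrow_off_def by simp

lemma yrow_mono: "a \<le> b \<Longrightarrow> yrow_off dy a \<le> yrow_off dy b"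
  unfolding yrow_off_def by (rule sum_mono2) auto

lemma row_end_y_eq: "row_end_y dy i = yrow_off dy (Suc i)"
  unfolding row_end_y_def yrow_off_def by (simp add: atLeast0AtMost lessThan_Suc_atMost)

lemma d_y_eq: "d_y n dy = yrow_off dy (Suc n)"
  unfolding d_y_def yrow_off_def by (simp add: atLeast0AtMost lessThan_Suc_atMost)

lemma sum0j_eq: "(\<Sum>k=0..j. dy k) = yrow_off dy (Suc j)"
  unfolding yrow_off_def by (simp add: atLeast0AtMost lessThan_Suc_atMost)

lemma xcol_anti: "a \<le> b \<Longrightarrow> xcol_off n dx b \<le> xcol_off n dx a"
  unfolding xcol_off_def by (rule sum_mono2) auto

lemma xcol_le_dx: "xcol_off n dx b \<le> d_x n dx"
proof -
  have "xcol_off n dx b \<le> xcol_off n dx 0" by (rule xcol_anti) simp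
  moreover have "xcol_off n dx 0 = d_x n dx" unfolding xcol_off_def d_x_def
    by (rule sum.cong) auto
  ultimately show ?thesis by simp
qed

lemma d_x_eq: "d_x n dx = xcol_off n dx 0"
  unfolding xcol_off_def d_x_def by (rule sum.cong) auto

lemma sumin_eq: "1 \<le> i \<Longrightarrow> (\<Sum>k=i..n. dx k) = xcol_off n dx (i - 1)"
  unfolding xcol_off_def by (rule sum.cong) auto

lemma xcol_pred: "1 \<le> b \<Longrightarrow> b \<le> n \<Longrightarrow> xcol_off n dx (b - 1) = xcol_off n dx b + dx b"
proof -
  assume b: "1 \<le> b" "b \<le> n"
  have "{b - 1<..n} = insert b {b<..n}" using b by auto
  thus ?thesis unfolding xcol_off_def by simp
qed

lemma col_end_x_eq: "1 \<le> j \<Longrightarrow> col_end_x n dx j = xcol_off n dx (j - 1)"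
  unfolding col_end_x_def by (rule sumin_eq)

lemma row_block_ex: "r < yrow_off dy m \<Longrightarrow> \<exists>a<m. yrow_off dy a \<le> r \<and> r < yrow_off dy (Suc a)"
proof (induction m)
  case 0 then show ?case by (simp add: yrow_off_def)
next
  case (Suc m)
  show ?case
  proof (cases "r < yrow_off dy m")
    case True
    then obtain a where "a < m" "yrow_off dy a \<le> r \<and> r < yrow_off dy (Suc a)" using Suc.IH by blast
    then show ?thesis by (intro exI[of _ a]) auto
  next
    case False then show ?thesis using Suc.prems by (intro exI[of _ m]) auto
  qed
qed

lemma row_block_uniq:
  assumes "yrow_off dy a \<le> r" "r < yrow_off dy (Suc a)" "yrow_off dy a' \<le> r" "r < yrow_off dy (Suc a')"
  shows "a = a'"
proof (rule ccontr)
  assume "a \<noteq> a'"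
  then consider "Suc a \<le> a'" | "Suc a' \<le> a" by linarith
  then show False
    by cases (use assms yrow_mono[of "Suc a" a' dy] yrow_mono[of "Suc a'" a dy] in auto)
qed

lemma col_block_ex_aux:
  "n - k = m \<Longrightarrow> c < xcol_off n dx k \<Longrightarrow> \<exists>b. k < b \<and> b \<le> n \<and> xcol_off n dx b \<le> c \<and> c < xcol_off n dx b + dx b"
proof (induction m arbitrary: k)
  case 0
  then have "{k<..n} = {}" by auto
  then show ?case using 0 by (simp add: xcol_off_def)
next
  case (Suc m)
  have kn: "k < n" using Suc.prems by auto
  have eq: "xcol_off n dx k = xcol_off n dx (Suc k) + dx (Suc k)"
    using xcol_pred[of "Suc k" n dx] kn by simp
  show ?case
  proof (cases "c < xcol_off n dx (Suc k)")
    case True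
    then obtain b where "Suc k < b \<and> b \<le> n \<and> xcol_off n dx b \<le> c \<and> c < xcol_off n dx b + dx b"
      using Suc.IH[of "Suc k"] Suc.prems by fastforce
    then show ?thesis by (intro exI[of _ b]) auto
  next
    case False
    then show ?thesis using Suc.prems eq kn by (intro exI[of _ "Suc k"]) auto
  qed
qed

lemma col_block_ex: "c < d_x n dx \<Longrightarrow> \<exists>b. 1 \<le> b \<and> b \<le> n \<and> xcol_off n dx b \<le> c \<and> c < xcol_off n dx b + dx b"
proof -
  assume "c < d_x n dx"
  then obtain b where "0 < b \<and> b \<le> n \<and> xcol_off n dx b \<le> c \<and> c < xcol_off n dx b + dx b"
    using col_block_ex_aux[of n 0 n c dx] d_x_eq[of n dx] by auto
  then show ?thesis by (intro exI[of _ b]) auto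
qed

lemma col_block_uniq:
  assumes "1 \<le> b" "b \<le> n" "xcol_off n dx b \<le> c" "c < xcol_off n dx b + dx b"
    "1 \<le> b'" "b' \<le> n" "xcol_off n dx b' \<le> c" "c < xcol_off n dx b' + dx b'"
  shows "b = b'"
proof (rule ccontr)
  assume "b \<noteq> b'"
  then consider "b \<le> b' - 1" | "b' \<le> b - 1" by linarith
  then show False
  proof cases
    case 1
    then show False using assms xcol_anti[OF 1, of n dx] xcol_pred[of b' n dx] by auto
  next
    case 2
    then show False using assms xcol_anti[OF 2, of n dx] xcol_pred[of b n dx] by auto
  qed
qed

definition band :: "nat \<Rightarrow> (nat \<Rightarrow> nat) \<Rightarrow> (nat \<Rightarrow> nat) \<Rightarrow> 'a::zero mat \<Rightarrow> bool" where
  "band n dx dy S = (\<forall>r c a b. r < d_y n dy \<longrightarrow> c < d_x n dx \<longrightarrow>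
     yrow_off dy a \<le> r \<longrightarrow> r < yrow_off dy (Suc a) \<longrightarrow>
     1 \<le> b \<longrightarrow> b \<le> n \<longrightarrow> xcol_off n dx b \<le> c \<longrightarrow> c < xcol_off n dx b + dx b \<longrightarrow>
     a \<noteq> b \<longrightarrow> Suc a \<noteq> b \<longrightarrow> S $$ (r,c) = 0)"

lemma MQ_band:
  assumes V: "V \<in> rep_Q n dx dy"
  shows "band n dx dy (M_Q n dx dy V)"
  unfolding band_def
proof (intro allI impI)
  fix r c a b
  assume h: "r < d_y n dy" "c < d_x n dx" "yrow_off dy a \<le> r" "r < yrow_off dy (Suc a)"
    "1 \<le> b" "b \<le> n" "xcol_off n dx b \<le> c" "c < xcol_off n dx b + dx b" "a \<noteq> b" "Suc a \<noteq> b"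
  obtain al be where Vab: "V = (al, be)" by (cases V)
  have dims: "\<And>i. i \<in> {1..n} \<Longrightarrow> al i \<in> carrier_mat (dy (i - 1)) (dx i) \<and> be i \<in> carrier_mat (dy i) (dx i)"
    using V unfolding Vab rep_Q_def by auto
  have t: "place (al i) (yrow_off dy (i - 1)) (xcol_off n dx i) r c
                 + place (be i) (yrow_off dy i) (xcol_off n dx i) r c = 0" if i: "i \<in> {1..n}" for i
  proof -
    have d: "dim_row (al i) = dy (i - 1)" "dim_col (al i) = dx i" "dim_row (be i) = dy i" "dim_col (be i) = dx i"
      using dims[OF i] by auto
    have "place (al i) (yrow_off dy (i - 1)) (xcol_off n dx i) r c = 0"
    proof (rule ccontr)
      assume "\<not> ?thesis"
      hence c1: "yrow_off dy (i - 1) \<le> r" "r < yrow_off dy (Suc (i - 1))" "xcol_off n dx i \<le> c" "c < xcol_off n dx i + dx i"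
        unfolding place_def d yrow_Suc by (auto split: if_splits)
      have "i = b" using col_block_uniq[of i n dx c b] c1 h i by auto
      moreover have "i - 1 = a" using row_block_uniq[OF c1(1,2) h(3,4)] .
      ultimately show False using h i by auto
    qed
    moreover have "place (be i) (yrow_off dy i) (xcol_off n dx i) r c = 0"
    proof (rule ccontr)
      assume "\<not> ?thesis"
      hence c1: "yrow_off dy i \<le> r" "r < yrow_off dy (Suc i)" "xcol_off n dx i \<le> c" "c < xcol_off n dx i + dx i"
        unfolding place_def d yrow_Suc by (auto split: if_splits)
      have "i = b" using col_block_uniq[of i n dx c b] c1 h i by auto
      moreover have "i = a" using row_block_uniq[OF c1(1,2) h(3,4)] .
      ultimately show False using h i by auto
    qed
    ultimately show ?thesis by simp
  qed
  have "M_Q n dx dy V $$ (r, c) = (\<Sum>i\<in>{1..n}. place (al i) (yrow_off dy (i - 1)) (xcol_off n dx i) r c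
                 + place (be i) (yrow_off dy i) (xcol_off n dx i) r c)"
    unfolding M_Q_def using h by (simp add: Vab del: sum.distrib)
  also have "\<dots> = 0" using t by simp
  finally show "M_Q n dx dy V $$ (r, c) = 0" .
qed

lemma band_MQ:
  assumes S: "S \<in> carrier_mat (d_y n dy) (d_x n dx)" and b: "band n dx dy S"
  shows "\<exists>V\<in>rep_Q n dx dy. M_Q n dx dy V = S"
proof -
  define al where "al = (\<lambda>i. mat (dy (i - 1)) (dx i) (\<lambda>(r,c). S $$ (yrow_off dy (i - 1) + r, xcol_off n dx i + c)))"
  define be where "be = (\<lambda>i. mat (dy i) (dx i) (\<lambda>(r,c). S $$ (yrow_off dy i + r, xcol_off n dx i + c)))"
  have V: "(al, be) \<in> rep_Q n dx dy" unfolding rep_Q_def al_def be_def by auto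
  have "M_Q n dx dy (al, be) = S"
  proof (rule eq_matI)
    show "dim_row (M_Q n dx dy (al, be)) = dim_row S" "dim_col (M_Q n dx dy (al, be)) = dim_col S"
      using S unfolding M_Q_def by auto
    fix r c assume rc: "r < dim_row S" "c < dim_col S"
    hence rc': "r < d_y n dy" "c < d_x n dx" using S by auto
    obtain a where a: "a < Suc n" "yrow_off dy a \<le> r" "r < yrow_off dy (Suc a)"
      using row_block_ex[of r dy "Suc n"] rc' d_y_eq by auto
    obtain bb where bb: "1 \<le> bb" "bb \<le> n" "xcol_off n dx bb \<le> c" "c < xcol_off n dx bb + dx bb"
      using col_block_ex[OF rc'(2)] by auto
    have t: "place (al i) (yrow_off dy (i - 1)) (xcol_off n dx i) r c
                 + place (be i) (yrow_off dy i) (xcol_off n dx i) r c =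
             (if i = bb then (if Suc a = bb then S $$ (r,c) else 0) + (if a = bb then S $$ (r,c) else 0) else 0)"
      if i: "i \<in> {1..n}" for i
    proof (cases "i = bb")
      case False
      have "\<not> (xcol_off n dx i \<le> c \<and> c < xcol_off n dx i + dx i)"
        using col_block_uniq[of i n dx c bb] bb i False by auto
      then show ?thesis using False unfolding place_def al_def be_def by auto
    next
      case True
      have e1: "(yrow_off dy (i - 1) \<le> r \<and> r < yrow_off dy (i - 1) + dy (i - 1)) = (Suc a = bb)"
      proof
        assume "yrow_off dy (i - 1) \<le> r \<and> r < yrow_off dy (i - 1) + dy (i - 1)"
        hence "i - 1 = a" using row_block_uniq[of dy "i - 1" r a] a by (auto simp: yrow_Suc)
        thus "Suc a = bb" using True i by auto
      next
        assume "Suc a = bb"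
        thus "yrow_off dy (i - 1) \<le> r \<and> r < yrow_off dy (i - 1) + dy (i - 1)" using True a by (auto simp: yrow_Suc)
      qed
      have e2: "(yrow_off dy i \<le> r \<and> r < yrow_off dy i + dy i) = (a = bb)"
      proof
        assume "yrow_off dy i \<le> r \<and> r < yrow_off dy i + dy i"
        hence "i = a" using row_block_uniq[of dy i r a] a by (auto simp: yrow_Suc)
        thus "a = bb" using True by auto
      next
        assume "a = bb"
        thus "yrow_off dy i \<le> r \<and> r < yrow_off dy i + dy i" using True a by (auto simp: yrow_Suc)
      qed
      have "place (al i) (yrow_off dy (i - 1)) (xcol_off n dx i) r c = (if Suc a = bb then S $$ (r,c) else 0)"
        unfolding place_def al_def using e1 True bb by auto
      moreover have "place (be i) (yrow_off dy i) (xcol_off n dx i) r c = (if a = bb then S $$ (r,c) else 0)"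
        unfolding place_def be_def using e2 True bb by auto
      ultimately show ?thesis using True by simp
    qed
    have "M_Q n dx dy (al, be) $$ (r, c) = (\<Sum>i\<in>{1..n}. place (al i) (yrow_off dy (i - 1)) (xcol_off n dx i) r c
                 + place (be i) (yrow_off dy i) (xcol_off n dx i) r c)"
      unfolding M_Q_def using rc' by (simp del: sum.distrib)
    also have "\<dots> = (\<Sum>i\<in>{1..n}. (if i = bb then (if Suc a = bb then S $$ (r,c) else 0) + (if a = bb then S $$ (r,c) else 0) else 0))"
      by (rule sum.cong[OF refl t])
    also have "\<dots> = (if Suc a = bb then S $$ (r,c) else 0) + (if a = bb then S $$ (r,c) else 0)"
      using bb by simp
    also have "\<dots> = S $$ (r,c)"
      using b rc' a bb unfolding band_def by auto
    finally show "M_Q n dx dy (al, be) $$ (r,c) = S $$ (r,c)" .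
  qed
  with V show ?thesis by blast
qed

lemma band_iff:
  fixes S :: "'a::zero mat"
  shows "band n dx dy S \<longleftrightarrow>
   ((\<forall>i j. i + 2 \<le> n \<and> i + 2 \<le> j \<and> j \<le> n \<longrightarrow>
       (\<forall>r c. r < yrow_off dy (Suc i) \<longrightarrow> c < xcol_off n dx (j - 1) \<longrightarrow> S $$ (r,c) = 0)) \<and>
    (\<forall>i j. 2 \<le> i \<and> i \<le> n \<and> i - 1 \<le> j \<and> j + 1 \<le> n \<longrightarrow>
       (\<forall>r c. yrow_off dy (Suc j) \<le> r \<longrightarrow> r < d_y n dy \<longrightarrow> xcol_off n dx (i - 1) \<le> c \<longrightarrow> c < d_x n dx \<longrightarrow> S $$ (r,c) = 0)))"
  (is "?B \<longleftrightarrow> ?NW \<and> ?SE")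
proof
  assume B: ?B
  show "?NW \<and> ?SE"
  proof (intro conjI allI impI)
    fix i j r c
    assume ij: "i + 2 \<le> n \<and> i + 2 \<le> j \<and> j \<le> n" and r: "r < yrow_off dy (Suc i)" and c: "c < xcol_off n dx (j - 1)"
    have rD: "r < d_y n dy" using r yrow_mono[of "Suc i" "Suc n" dy] ij d_y_eq[of n dy] by auto
    have cD: "c < d_x n dx" using c xcol_le_dx[of n dx "j - 1"] by auto
    obtain a where a: "a < Suc n" "yrow_off dy a \<le> r" "r < yrow_off dy (Suc a)"
      using row_block_ex[of r dy "Suc n"] rD d_y_eq by auto
    obtain b where b: "1 \<le> b" "b \<le> n" "xcol_off n dx b \<le> c" "c < xcol_off n dx b + dx b"
      using col_block_ex[OF cD] by auto
    have "a \<le> i"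
    proof (rule ccontr)
      assume "\<not> a \<le> i" hence "Suc i \<le> a" by simp
      thus False using yrow_mono[of "Suc i" a dy] a r by auto
    qed
    moreover have "j \<le> b"
    proof (rule ccontr)
      assume "\<not> j \<le> b" hence "b \<le> j - 1" by simp
      thus False using xcol_anti[of b "j - 1" n dx] b c by auto
    qed
    ultimately show "S $$ (r,c) = 0" using B[unfolded band_def, rule_format, of r c a b] rD cD a b ij by auto
  next
    fix i j r c
    assume ij: "2 \<le> i \<and> i \<le> n \<and> i - 1 \<le> j \<and> j + 1 \<le> n" and r: "yrow_off dy (Suc j) \<le> r" "r < d_y n dy"
      and c: "xcol_off n dx (i - 1) \<le> c" "c < d_x n dx"
    obtain a where a: "a < Suc n" "yrow_off dy a \<le> r" "r < yrow_off dy (Suc a)"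
      using row_block_ex[of r dy "Suc n"] r d_y_eq by auto
    obtain b where b: "1 \<le> b" "b \<le> n" "xcol_off n dx b \<le> c" "c < xcol_off n dx b + dx b"
      using col_block_ex[OF c(2)] by auto
    have "j < a"
    proof (rule ccontr)
      assume "\<not> j < a" hence "Suc a \<le> Suc j" by simp
      thus False using yrow_mono[of "Suc a" "Suc j" dy] a r by auto
    qed
    moreover have "b < i"
    proof (rule ccontr)
      assume "\<not> b < i" hence "i - 1 \<le> b - 1" by simp
      thus False using xcol_anti[of "i - 1" "b - 1" n dx] b c xcol_pred[of b n dx] by auto
    qed
    ultimately show "S $$ (r,c) = 0" using B[unfolded band_def, rule_format, of r c a b] r c a b ij by auto
  qed
next
  assume h: "?NW \<and> ?SE"
  show ?B unfolding band_def
  proof (intro allI impI)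
    fix r c a b
    assume H: "r < d_y n dy" "c < d_x n dx" "yrow_off dy a \<le> r" "r < yrow_off dy (Suc a)"
      "1 \<le> b" "b \<le> n" "xcol_off n dx b \<le> c" "c < xcol_off n dx b + dx b" "a \<noteq> b" "Suc a \<noteq> b"
    have an: "a \<le> n"
    proof (rule ccontr)
      assume "\<not> a \<le> n" hence "Suc n \<le> a" by simp
      thus False using yrow_mono[of "Suc n" a dy] H d_y_eq[of n dy] by auto
    qed
    consider "a + 2 \<le> b" | "b + 1 \<le> a" using H by linarith
    then show "S $$ (r,c) = 0"
    proof cases
      case 1
      have "c < xcol_off n dx (b - 1)" using H xcol_pred[of b n dx] by auto
      then show ?thesis using h[THEN conjunct1, rule_format, of a b r c] 1 H by auto
    next
      case 2
      have e: "Suc (a - 1) = a" "b + 1 - 1 = b" using 2 by auto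
      show ?thesis using h[THEN conjunct2, rule_format, of "b + 1" "a - 1" r c] 2 H an e by auto
    qed
  qed
qed

lemma nw_ij:
  fixes S :: "'a::field mat"
  assumes S: "S \<in> carrier_mat (d_y n dy) (d_x n dx)" and Z: "Z = zeta_block n dx dy S"
    and ij: "i + 2 \<le> n \<and> i + 2 \<le> j \<and> j \<le> n"
  shows "mat_rank (Z_yx n dx dy Z i j) = 0 \<longleftrightarrow>
     (\<forall>r c. r < yrow_off dy (Suc i) \<longrightarrow> c < xcol_off n dx (j - 1) \<longrightarrow> S $$ (r,c) = 0)"
proof -
  have R: "yrow_off dy (Suc i) \<le> d_y n dy" using yrow_mono[of "Suc i" "Suc n" dy] ij d_y_eq[of n dy] by auto
  have C: "xcol_off n dx (j - 1) \<le> d_x n dx" by (rule xcol_le_dx)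
  have ZY: "Z_yx n dx dy Z i j = nw_sub Z (yrow_off dy (Suc i)) (xcol_off n dx (j - 1))"
    unfolding Z_yx_def row_end_y_eq using col_end_x_eq[of j n dx] ij by simp
  have ent: "Z_yx n dx dy Z i j $$ (r,c) = S $$ (r,c)" if "r < yrow_off dy (Suc i)" "c < xcol_off n dx (j - 1)" for r c
    using that R C zb_entry[OF S, of r c] unfolding ZY nw_sub_def by (auto simp: Z)
  show ?thesis unfolding mat_rank_0_iff using ent by (auto simp: ZY nw_sub_def)
qed

lemma se_ij:
  fixes S :: "'a::field mat"
  assumes S: "S \<in> carrier_mat (d_y n dy) (d_x n dx)" and Z: "Z = zeta_block n dx dy S"
    and ij: "2 \<le> i \<and> i \<le> n \<and> i - 1 \<le> j \<and> j + 1 \<le> n"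
  shows "mat_rank (Z_xy n dx dy Z i j) = (\<Sum>k=i..n. dx k) + (\<Sum>k=0..j. dy k) \<longleftrightarrow>
     (\<forall>r c. yrow_off dy (Suc j) \<le> r \<longrightarrow> r < d_y n dy \<longrightarrow> xcol_off n dx (i - 1) \<le> c \<longrightarrow> c < d_x n dx \<longrightarrow> S $$ (r,c) = 0)"
proof -
  define p where "p = (\<Sum>k=i..n. dx k)"
  define q where "q = (\<Sum>k=0..j. dy k)"
  have p: "p = xcol_off n dx (i - 1)" unfolding p_def using sumin_eq[where i=i and n=n and dx=dx] ij by simp
  have q: "q = yrow_off dy (Suc j)" unfolding q_def by (rule sum0j_eq)
  have pD: "p \<le> d_x n dx" unfolding p by (rule xcol_le_dx)
  have qD: "q \<le> d_y n dy" unfolding q using yrow_mono[of "Suc j" "Suc n" dy] ij d_y_eq[of n dy] by auto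
  have ZX: "Z_xy n dx dy Z i j = nw_sub Z (d_y n dy + p) (d_x n dx + q)"
    unfolding Z_xy_def row_end_x_def col_end_y_def p_def q_def ..
  have "mat_rank (Z_xy n dx dy Z i j) = p + q \<longleftrightarrow>
     (\<forall>r c. q \<le> r \<longrightarrow> r < d_y n dy \<longrightarrow> p \<le> c \<longrightarrow> c < d_x n dx \<longrightarrow> S $$ (r,c) = 0)"
  proof (rule rank_block[OF _ pD qD])
    show "Z_xy n dx dy Z i j \<in> carrier_mat (d_y n dy + p) (d_x n dx + q)" unfolding ZX nw_sub_def by auto
    fix r c assume rc: "r < d_y n dy + p" "c < d_x n dx + q"
    show "Z_xy n dx dy Z i j $$ (r, c) =
       (if r < d_y n dy then if c < d_x n dx then S $$ (r, c) else if r = c - d_x n dx then 1 else 0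
        else if c < d_x n dx then if r - d_y n dy = c then 1 else 0 else 0)"
      using rc pD qD zb_entry[OF S, of r c] unfolding ZX nw_sub_def by (auto simp: Z)
  qed
  then show ?thesis unfolding p q p_def[symmetric] q_def[symmetric] .
qed

theorem lemmaA2:
  fixes n :: nat and dx dy :: "nat \<Rightarrow> nat" and Z :: "'a::field mat"
  assumes "Z \<in> Y_circ n dx dy"
  shows "Z \<in> zeta n dx dy ` rep_Q n dx dy \<longleftrightarrow>
    ((\<forall>i j. i + 2 \<le> n \<and> i + 2 \<le> j \<and> j \<le> n \<longrightarrow> mat_rank (Z_yx n dx dy Z i j) = 0) \<and>
     (\<forall>i j. 2 \<le> i \<and> i \<le> n \<and> i - 1 \<le> j \<and> j + 1 \<le> n \<longrightarrow>
        mat_rank (Z_xy n dx dy Z i j) = (\<Sum>k=i..n. dx k) + (\<Sum>k=0..j. dy k)))"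
proof -
  obtain S where S: "S \<in> carrier_mat (d_y n dy) (d_x n dx)" and Z: "Z = zeta_block n dx dy S"
    using assms unfolding Y_circ_def by auto
  have img: "Z \<in> zeta n dx dy ` rep_Q n dx dy \<longleftrightarrow> band n dx dy S"
  proof
    assume "Z \<in> zeta n dx dy ` rep_Q n dx dy"
    then obtain V where V: "V \<in> rep_Q n dx dy" "Z = zeta_block n dx dy (M_Q n dx dy V)"
      unfolding zeta_def by auto
    have MC: "M_Q n dx dy V \<in> carrier_mat (d_y n dy) (d_x n dx)" unfolding M_Q_def by auto
    have "M_Q n dx dy V = S"
    proof (rule eq_matI)
      fix r c assume rc: "r < dim_row S" "c < dim_col S"
      have "zeta_block n dx dy (M_Q n dx dy V) $$ (r,c) = zeta_block n dx dy S $$ (r,c)" using V Z by simp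
      then show "M_Q n dx dy V $$ (r,c) = S $$ (r,c)"
        using zb_entry[OF MC, of r c] zb_entry[OF S, of r c] rc S by auto
    qed (use MC S in auto)
    then show "band n dx dy S" using MQ_band[OF V(1)] by simp
  next
    assume "band n dx dy S"
    then obtain V where "V \<in> rep_Q n dx dy" "M_Q n dx dy V = S" using band_MQ[OF S] by auto
    then show "Z \<in> zeta n dx dy ` rep_Q n dx dy" unfolding zeta_def Z by auto
  qed
  have nw: "(\<forall>i j. i + 2 \<le> n \<and> i + 2 \<le> j \<and> j \<le> n \<longrightarrow> mat_rank (Z_yx n dx dy Z i j) = 0) \<longleftrightarrow>
     (\<forall>i j. i + 2 \<le> n \<and> i + 2 \<le> j \<and> j \<le> n \<longrightarrow>
       (\<forall>r c. r < yrow_off dy (Suc i) \<longrightarrow> c < xcol_off n dx (j - 1) \<longrightarrow> S $$ (r,c) = 0))"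
    using nw_ij[OF S Z] by blast
  have se: "(\<forall>i j. 2 \<le> i \<and> i \<le> n \<and> i - 1 \<le> j \<and> j + 1 \<le> n \<longrightarrow>
        mat_rank (Z_xy n dx dy Z i j) = (\<Sum>k=i..n. dx k) + (\<Sum>k=0..j. dy k)) \<longleftrightarrow>
     (\<forall>i j. 2 \<le> i \<and> i \<le> n \<and> i - 1 \<le> j \<and> j + 1 \<le> n \<longrightarrow>
       (\<forall>r c. yrow_off dy (Suc j) \<le> r \<longrightarrow> r < d_y n dy \<longrightarrow> xcol_off n dx (i - 1) \<le> c \<longrightarrow> c < d_x n dx \<longrightarrow> S $$ (r,c) = 0))"
    using se_ij[OF S Z] by blast
  show ?thesis unfolding img nw se band_iff ..
qed

end
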